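(* Fix $d\geq3$ and let $T$ be a subset of $\mathbb{N}_0^d$ whose affine span has dimension $2$. Then the $2$-completion $E_2^\infty(T)$ of $T$ equals $\Lambda(T)\cap\mathbb{N}_0^d$.
   Context: $\mathbb{N}_0=\{0,1,2,\dots\}$. For nonempty $\Gamma\subseteq\mathbb{N}_0^d$, $\Lambda(\Gamma)$ is the coset in $\mathbb{Z}^d$ generated by $\Gamma$ (smallest coset of a subgroup of $\mathbb{Z}^d$ containing $\Gamma$); each $\lambda\in\Lambda(\Gamma)$ can be written $\lambda=\gamma+\sum_{\alpha\in\Gamma,\alpha\neq\gamma}m_{\gamma,\alpha}(\alpha-\gamma)$ with $\gamma\in\Gamma$ and integers $m_{\gamma,\alpha}$, finitely many nonzero. $d(\Gamma,\lambda)$ is the infimum over all such representations of $\max\big(\sum_{m_{\gamma,\alpha}>0}m_{\gamma,\alpha},-\sum_{m_{\gamma,\alpha}<0}m_{\gamma,\alpha}\big)$, and $E_n(\Gamma)=\{\lambda\in\Lambda(\Gamma)\cap\mathbb{N}_0^d:d(\Gamma,\lambda)\leq n\}$. Set $E_n^1(T)=E_n(T)$, $E_n^{k+1}(T)=E_n(E_n^k(T))$, and the $n$-completion $E_n^\infty(T)=\bigcup_{k\geq1}E_n^k(T)$. *)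

theory Defs
  imports "HOL-Analysis.Analysis" "HOL-Library.Extended_Nat"
begin

text \<open>Points of Z^d are vectors int^'n (d = CARD('n)); N_0^d is the nonnegative orthant.\<close>

definition N0 :: "(int ^ 'n) set" where
  "N0 = {x. \<forall>i. 0 \<le> x $ i}"

definition is_subgroup :: "(int ^ 'n) set \<Rightarrow> bool" where
  "is_subgroup H \<longleftrightarrow> 0 \<in> H \<and> (\<forall>x\<in>H. \<forall>y\<in>H. x + y \<in> H) \<and> (\<forall>x\<in>H. - x \<in> H)"

definition is_coset :: "(int ^ 'n) set \<Rightarrow> bool" where
  "is_coset C \<longleftrightarrow> (\<exists>a H. is_subgroup H \<and> C = (\<lambda>h. a + h) ` H)"

definition Lam :: "(int ^ 'n) set \<Rightarrow> (int ^ 'n) set" where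
  "Lam G = \<Inter> {C. is_coset C \<and> G \<subseteq> C}"

definition is_rep :: "(int ^ 'n) set \<Rightarrow> int ^ 'n \<Rightarrow> int ^ 'n \<Rightarrow> (int ^ 'n \<Rightarrow> int) \<Rightarrow> bool" where
  "is_rep G lam g m \<longleftrightarrow> g \<in> G \<and> finite {a. m a \<noteq> 0} \<and>
     (\<forall>a. m a \<noteq> 0 \<longrightarrow> a \<in> G \<and> a \<noteq> g) \<and>
     lam = g + (\<Sum>a\<in>{a. m a \<noteq> 0}. m a *s (a - g))"

definition rep_cost :: "(int ^ 'n \<Rightarrow> int) \<Rightarrow> nat" where
  "rep_cost m = nat (max (\<Sum>a\<in>{a. m a \<noteq> 0}. max (m a) 0) (- (\<Sum>a\<in>{a. m a \<noteq> 0}. min (m a) 0)))"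

text \<open>d(Gamma, lambda) as an infimum in enat (infinity if no representation exists).\<close>
definition dist_G :: "(int ^ 'n) set \<Rightarrow> int ^ 'n \<Rightarrow> enat" where
  "dist_G G lam = Inf {enat (rep_cost m) | g m. is_rep G lam g m}"

definition E :: "nat \<Rightarrow> (int ^ 'n) set \<Rightarrow> (int ^ 'n) set" where
  "E n G = {lam \<in> Lam G \<inter> N0. dist_G G lam \<le> enat n}"

definition completion :: "nat \<Rightarrow> (int ^ 'n) set \<Rightarrow> (int ^ 'n) set" where
  "completion n T = (\<Union>k\<in>{1..}. (E n ^^ k) T)"

definition to_real :: "int ^ 'n \<Rightarrow> real ^ 'n" where
  "to_real x = (\<chi> i. real_of_int (x $ i))"

end

theory Submission
  imports Defs
begin

lemma N0_iff: "x \<in> N0 \<longleftrightarrow> (\<forall>i. 0 \<le> x $ i)"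
  by (simp add: N0_def)

lemma N0_scale: assumes "\<And>i. 0 \<le> (c::int) * x $ i" "c > 0" shows "x \<in> N0"
  using assms by (auto simp: N0_iff zero_le_mult_iff)

locale cl =
  fixes C :: "(int ^ 'n) set"
  assumes subN0: "C \<subseteq> N0"
    and mv: "\<And>a b c d e. a \<in> C \<Longrightarrow> b \<in> C \<Longrightarrow> c \<in> C \<Longrightarrow> d \<in> C \<Longrightarrow> e \<in> C
        \<Longrightarrow> a + b + c - d - e \<in> N0 \<Longrightarrow> a + b + c - d - e \<in> C"
begin

lemma mv': "a \<in> C \<Longrightarrow> b \<in> C \<Longrightarrow> c \<in> C \<Longrightarrow> d \<in> C \<Longrightarrow> e \<in> C
        \<Longrightarrow> x = a + b + c - d - e \<Longrightarrow> x \<in> N0 \<Longrightarrow> x \<in> C"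
  using mv by blast

lemma line_pos:
  assumes a: "a \<in> C" and b: "b \<in> C"
  shows "(\<forall>k::nat. k \<le> n \<longrightarrow> a + int k *s (b - a) \<in> N0) \<Longrightarrow> (\<forall>k\<le>n. a + int k *s (b - a) \<in> C)"
proof (induction n)
  case 0
  then show ?case using a by simp
next
  case (Suc n)
  have IH: "\<forall>k\<le>n. a + int k *s (b - a) \<in> C" using Suc by auto
  show ?case
  proof (intro allI impI)
    fix k assume k: "k \<le> Suc n"
    show "a + int k *s (b - a) \<in> C"
    proof (cases "k \<le> n")
      case True then show ?thesis using IH by blast
    next
      case False
      then have kk: "k = Suc n" using k by simp
      show ?thesis
      proof (cases n)
        case 0
        then show ?thesis using kk b by simp
      next
        case (Suc n')
        have c1: "a + int n *s (b - a) \<in> C" using IH by blast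
        have c2: "a + int n' *s (b - a) \<in> C" using IH Suc by auto
        show ?thesis
          apply (rule mv'[OF c1 c1 a a c2])
          using Suc kk apply (simp add: vec_eq_iff algebra_simps)
          using Suc.prems kk by blast
      qed
    qed
  qed
qed

lemma line_int:
  assumes a: "a \<in> C" and b: "b \<in> C"
    and h: "\<And>k::int. (0 \<le> k \<and> k \<le> g) \<or> (g \<le> k \<and> k \<le> 0) \<Longrightarrow> a + k *s (b - a) \<in> N0"
  shows "a + g *s (b - a) \<in> C"
proof (cases "g \<ge> 0")
  case True
  have "\<forall>k\<le>nat g. a + int k *s (b - a) \<in> C"
    apply (rule line_pos[OF a b])
    apply (intro allI impI)
    subgoal for k using h[of "int k"] True by (simp add: le_nat_iff)
    done
  then show ?thesis using True by (metis int_nat_eq order_refl)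
next
  case False
  have eqm: "a + (-1) *s (b - a) = 2 *s a - b" by (simp add: vec_eq_iff)
  have b': "2 *s a - b \<in> C"
    apply (rule mv'[OF a a a a b])
     apply (simp add: vec_eq_iff algebra_simps)
    using h[of "-1"] False eqm by auto
  have "\<forall>k\<le>nat (-g). a + int k *s ((2 *s a - b) - a) \<in> C"
    apply (rule line_pos[OF a b'])
    apply (intro allI impI)
    subgoal for k
    proof -
      assume kk: "k \<le> nat (- g)"
      have e: "a + int k *s ((2 *s a - b) - a) = a + (- int k) *s (b - a)"
        by (simp add: vec_eq_iff algebra_simps)
      have "g \<le> - int k" using kk False by simp
      then show ?thesis using h[of "- int k"] e by simp
    qed
    done
  then have "a + int (nat (-g)) *s ((2 *s a - b) - a) \<in> C" by blast
  moreover have "a + int (nat (-g)) *s ((2 *s a - b) - a) = a + g *s (b - a)"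
    using False by (simp add: vec_eq_iff algebra_simps)
  ultimately show ?thesis by simp
qed


lemma CN0: "x \<in> C \<Longrightarrow> 0 \<le> x $ i"
  using subN0 by (auto simp: N0_iff)

lemma H1pos:
  assumes p: "p \<in> C" and q: "q \<in> C" and r: "r \<in> C" and s: "s \<ge> 1"
    and x: "x = p + s *s (q - p) + (p - r)" and xN: "x \<in> N0"
  shows "x \<in> C"
proof -
  define k0 where "k0 = s div 2"
  have k0: "0 \<le> k0" "2*k0 \<le> s" "s \<le> 2*k0 + 1" using s unfolding k0_def by auto
  have P: "p + k0 *s (q - p) \<in> C"
  proof (rule line_int[OF p q])
    fix k :: int assume "0 \<le> k \<and> k \<le> k0 \<or> k0 \<le> k \<and> k \<le> 0"
    then have kk: "0 \<le> k" "2*k \<le> s" using k0 by auto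
    show "p + k *s (q - p) \<in> N0"
    proof (rule N0_scale[of s])
      fix i
      have "s * (p + k *s (q - p)) $ i = (s - 2*k) * p $ i + k * r $ i + k * x $ i"
        by (simp add: x algebra_simps)
      also have "\<dots> \<ge> 0" using kk CN0[OF p] CN0[OF r] xN
        by (auto simp: N0_iff intro!: add_nonneg_nonneg mult_nonneg_nonneg)
      finally show "0 \<le> s * (p + k *s (q - p)) $ i" .
    qed (use s in simp)
  qed
  show ?thesis
  proof (cases "s = 2*k0")
    case True
    show ?thesis
      by (rule mv'[OF P P p p r]) (use True xN in \<open>simp_all add: x vec_eq_iff algebra_simps\<close>)
  next
    case False
    then have "s = 2*k0+1" using k0 by simp
    then show ?thesis
      by (intro mv'[OF P P q p r]) (use xN in \<open>simp_all add: x vec_eq_iff algebra_simps\<close>)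
  qed
qed

lemma H1:
  assumes p: "p \<in> C" and q: "q \<in> C" and r: "r \<in> C"
    and x: "x = p + s *s (q - p) + (p - r)" and xN: "x \<in> N0"
  shows "x \<in> C"
proof (cases "s \<ge> 1")
  case True
  show ?thesis by (rule H1pos[OF p q r True x xN])
next
  case False
  have e: "x = q + (2 - s) *s (p - q) + (q - r)" by (simp add: x vec_eq_iff algebra_simps)
  have "2 - s \<ge> 1" using False by simp
  from H1pos[OF q p r this e xN] show ?thesis .
qed

lemma EL:
  "1 \<le> h \<Longrightarrow> p \<in> C \<Longrightarrow> q \<in> C \<Longrightarrow> r \<in> C \<Longrightarrow> x = p + s *s (q - p) + int h *s (p - r)
    \<Longrightarrow> x \<in> N0 \<Longrightarrow> x \<in> C"
proof (induction h arbitrary: p q r s x rule: less_induct)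
  case (less h)
  note p = less.prems(2) and q = less.prems(3) and r = less.prems(4)
    and x = less.prems(5) and xN = less.prems(6)
  show ?case
  proof (cases "h = 1")
    case True
    then show ?thesis using H1[OF p q r _ xN] x by simp
  next
    case False
    then have h2: "h \<ge> 2" using less.prems(1) by simp
    define m where "m = - ((- s) div int h)"
    define h' where "h' = (- s) mod int h"
    have dm: "- s = int h * ((- s) div int h) + (- s) mod int h" by simp
    have sm: "s = int h * m - h'" using dm unfolding m_def h'_def by linarith
    have h'0: "0 \<le> h'" "h' < int h" using h2 unfolding h'_def by auto
    define y where "y = p + m *s (q - p) + (p - r)"
    have yN: "y \<in> N0"
    proof (rule N0_scale[of "int h"])
      fix i
      have "int h * y $ i = x $ i + h' * q $ i + (int h - 1 - h') * p $ i"
        by (simp add: x y_def sm algebra_simps)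
      also have "\<dots> \<ge> 0" using h'0 CN0[OF p] CN0[OF q] xN
        by (auto simp: N0_iff intro!: add_nonneg_nonneg mult_nonneg_nonneg)
      finally show "0 \<le> int h * y $ i" .
    qed (use h2 in simp)
    have yC: "y \<in> C"
      using less.IH[of 1 p q r y m] h2 p q r yN by (simp add: y_def)
    have x2: "x = p + int h *s (y - p) + h' *s (p - q)"
      by (simp add: x y_def sm vec_eq_iff algebra_simps)
    show ?thesis
    proof (cases "h' = 0")
      case False
      then have "1 \<le> nat h'" "nat h' < h" using h'0 by auto
      moreover have "x = p + int h *s (y - p) + int (nat h') *s (p - q)" using x2 h'0 by simp
      ultimately show ?thesis using less.IH[of "nat h'" p y q x "int h"] p yC q xN by simp
    next
      case True
      then have x3: "x = p + int h *s (y - p)" using x2 by simp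
      show ?thesis unfolding x3
      proof (rule line_int[OF p yC])
        fix k :: int assume "0 \<le> k \<and> k \<le> int h \<or> int h \<le> k \<and> k \<le> 0"
        then have kk: "0 \<le> k" "k \<le> int h" using h2 by auto
        show "p + k *s (y - p) \<in> N0"
        proof (rule N0_scale[of "int h"])
          fix i
          have "int h * (p + k *s (y - p)) $ i = (int h - k) * p $ i + k * x $ i"
            by (simp add: x3 algebra_simps)
          also have "\<dots> \<ge> 0" using kk CN0[OF p] xN
            by (auto simp: N0_iff intro!: add_nonneg_nonneg mult_nonneg_nonneg)
          finally show "0 \<le> int h * (p + k *s (y - p)) $ i" .
        qed (use h2 in simp)
      qed
    qed
  qed
qed

lemma PI:
  assumes p: "p \<in> C" and q: "q \<in> C" and r: "r \<in> C"
    and x: "x = p + a *s (q - p) + b *s (p - r)" and xN: "x \<in> N0"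
  shows "x \<in> C"
proof -
  consider "b \<ge> 1" | "a \<le> -1" | "a - b - 1 \<ge> 1" | "b \<le> 0" "a \<ge> 0" "a - b - 1 \<le> 0" by linarith
  then show ?thesis
  proof cases
    case 1
    then show ?thesis using EL[of "nat b" p q r x a] p q r xN x by simp
  next
    case 2
    have "x = p + (-b) *s (r - p) + int (nat (-a)) *s (p - q)"
      using 2 by (simp add: x vec_eq_iff algebra_simps)
    then show ?thesis using EL[of "nat (-a)" p r q x "-b"] p q r xN 2 by simp
  next
    case 3
    have "x = q + (-b) *s (r - q) + int (nat (a - b - 1)) *s (q - p)"
      using 3 by (simp add: x vec_eq_iff algebra_simps)
    then show ?thesis using EL[of "nat (a - b - 1)" q r p x "-b"] p q r xN 3 by simp
  next
    case 4
    then consider "a = 0" "b = 0" | "a = 0" "b = -1" | "a = 1" "b = 0" by linarith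
    then have "x = p \<or> x = r \<or> x = q"
      by cases (simp_all add: x vec_eq_iff)
    then show ?thesis using p q r by auto
  qed
qed

end

definition dl :: "'n \<Rightarrow> 'n \<Rightarrow> int ^ 'n \<Rightarrow> int ^ 'n \<Rightarrow> int" where
  "dl i j x y = x $ i * y $ j - x $ j * y $ i"

lemma to_real_comp[simp]: "to_real x $ k = real_of_int (x $ k)"
  by (simp add: to_real_def)

lemma to_real_inj: "to_real x = to_real y \<Longrightarrow> x = y"
  by (simp add: vec_eq_iff)

definition crd :: "int ^ 'n \<Rightarrow> int ^ 'n \<Rightarrow> int ^ 'n \<Rightarrow> int ^ 'n \<Rightarrow> real \<Rightarrow> real \<Rightarrow> bool" where
  "crd p q r z s h \<longleftrightarrow> (\<forall>k. real_of_int (z $ k) = real_of_int (p $ k)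
      + s * (real_of_int (q $ k) - real_of_int (p $ k)) + h * (real_of_int (p $ k) - real_of_int (r $ k)))"

lemma crdD: "crd p q r z s h \<Longrightarrow> real_of_int (z $ k) = real_of_int (p $ k)
      + s * (real_of_int (q $ k) - real_of_int (p $ k)) + h * (real_of_int (p $ k) - real_of_int (r $ k))"
  by (simp add: crd_def)

lemma N0_conv3:
  assumes "\<And>k. real_of_int (w $ k) = a * real_of_int (x $ k) + b * real_of_int (y $ k) + c * real_of_int (z $ k)"
    "0 \<le> a" "0 \<le> b" "0 \<le> c" "x \<in> N0" "y \<in> N0" "z \<in> N0"
  shows "w \<in> N0"
proof -
  have "0 \<le> real_of_int (w $ k)" for k
    using assms(2-7) unfolding assms(1) by (auto simp: N0_iff intro!: add_nonneg_nonneg mult_nonneg_nonneg)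
  then show ?thesis by (auto simp: N0_iff)
qed

lemma crd_dl: "crd p q r z s h \<Longrightarrow>
  real_of_int (dl i j (q - p) (z - p)) = (- h) * real_of_int (dl i j (q - p) (r - p))"
  by (simp add: dl_def crdD[of p q r z s h i] crdD[of p q r z s h j] algebra_simps)

context cl begin

lemma CN0': "x \<in> C \<Longrightarrow> x \<in> N0" using subN0 by auto

end

locale cl2 = cl C for C :: "(int ^ 'n) set" +
  fixes i j :: 'n and D :: int
  assumes Dpos: "D > 0"
    and Dmin: "\<And>a b c. a \<in> C \<Longrightarrow> b \<in> C \<Longrightarrow> c \<in> C \<Longrightarrow> dl i j (b - a) (c - a) \<noteq> 0
        \<Longrightarrow> D \<le> \<bar>dl i j (b - a) (c - a)\<bar>"
begin

lemma Tri:
  assumes "a \<in> C" "b \<in> C" "c \<in> C"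
    and e: "real_of_int (dl i j (b - a) (c - a)) = t * real_of_int Dv"
    and "\<bar>Dv\<bar> = D" "0 < \<bar>t\<bar>" "\<bar>t\<bar> < 1"
  shows False
proof -
  define X where "X = dl i j (b - a) (c - a)"
  have "\<bar>real_of_int Dv\<bar> = real_of_int D" using assms(5) by (metis of_int_abs)
  then have "\<bar>real_of_int X\<bar> = \<bar>t\<bar> * real_of_int D"
    using e unfolding X_def by (simp add: abs_mult)
  moreover have "real_of_int D > 0" using Dpos by simp
  ultimately have 1: "0 < \<bar>real_of_int X\<bar>" "\<bar>real_of_int X\<bar> < real_of_int D"
    using assms(6,7) by (auto simp: mult_less_cancel_right2)
  then have "X \<noteq> 0" "\<bar>X\<bar> < D" by linarith+
  then show False using Dmin[OF assms(1-3)] unfolding X_def by simp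
qed

lemma LineContra:
  assumes a: "a \<in> C" and b: "b \<in> C" and c: "c \<in> C" and z: "z \<in> C"
    and Dv: "\<bar>dl i j (b - a) (c - a)\<bar> = D"
    and zc: "\<And>k. real_of_int (z $ k) = real_of_int (a $ k) + f * (real_of_int (b $ k) - real_of_int (a $ k))"
    and f: "f \<notin> \<int>"
  shows False
proof -
  define g :: int where "g = (if f > 0 then \<lfloor>f\<rfloor> else \<lceil>f\<rceil>)"
  have f0: "f \<noteq> 0" using f by auto
  have "f \<noteq> of_int g" using f by auto
  then have gf1: "0 < \<bar>f - g\<bar>" by simp
  have gf2: "\<bar>f - g\<bar> < 1" unfolding g_def by (auto simp: abs_if) linarith+
  have G: "a + g *s (b - a) \<in> C"
  proof (rule line_int[OF a b])
    fix k :: int assume k: "0 \<le> k \<and> k \<le> g \<or> g \<le> k \<and> k \<le> 0"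
    have kf: "0 \<le> k / f \<and> k / f \<le> 1"
    proof (cases "f > 0")
      case True
      then have "g = \<lfloor>f\<rfloor>" "0 \<le> g" unfolding g_def by auto
      then have "0 \<le> k" "real_of_int k \<le> f" using k by linarith+
      then show ?thesis using True by auto
    next
      case False
      then have fn: "f < 0" using f0 by simp
      then have "g = \<lceil>f\<rceil>" "g \<le> 0" unfolding g_def by auto
      then have "k \<le> 0" "f \<le> real_of_int k" using k by linarith+
      then show ?thesis using fn by (auto simp: divide_le_eq_1 zero_le_divide_iff)
    qed
    show "a + k *s (b - a) \<in> N0"
    proof (rule N0_conv3[where a = "1 - k / f" and b = "k / f" and c = 0 and x = a and y = z and z = a])
      fix m
      show "real_of_int ((a + k *s (b - a)) $ m) = (1 - k / f) * real_of_int (a $ m)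
          + k / f * real_of_int (z $ m) + 0 * real_of_int (a $ m)"
        using f0 by (simp add: zc field_simps)
    qed (use kf CN0' a z in auto)
  qed
  have e: "real_of_int (dl i j (z - (a + g *s (b - a))) (c - (a + g *s (b - a))))
      = (f - g) * real_of_int (dl i j (b - a) (c - a))"
    by (simp add: dl_def zc algebra_simps)
  show False
    using Tri[OF G z c e Dv] gf1 gf2 by simp
qed

end

context cl begin

lemma linept:
  assumes p: "p \<in> C" and q: "q \<in> C" and r: "r \<in> C" and z: "z \<in> C"
    and cz: "crd p q r z s h" and h: "h \<ge> 1" and s: "s \<noteq> 0"
    and k: "(0 \<le> k \<and> k \<le> s / (h + 1)) \<or> (s / (h+1) \<le> k \<and> k \<le> 0)"
  shows "p + k *s (q - p) \<in> N0"
proof (rule N0_conv3[where a = "1 - k * (h+1) / s" and b = "k / s" and c = "k * h / s"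
      and x = p and y = z and z = r])
  fix m
  show "real_of_int ((p + k *s (q - p)) $ m) = (1 - k * (h+1) / s) * real_of_int (p $ m)
     + k / s * real_of_int (z $ m) + k * h / s * real_of_int (r $ m)"
    using s by (simp add: crdD[OF cz] field_simps)
next
  have hp: "h + 1 > 0" using h by simp
  consider "s > 0" | "s < 0" using s by linarith
  then have "0 \<le> k / s \<and> 0 \<le> k * h / s \<and> k * (h+1) / s \<le> 1"
  proof cases
    case 1
    then have "s / (h+1) > 0" using hp by simp
    then have "0 \<le> k" "k \<le> s / (h+1)" using k by linarith+
    then have "0 \<le> k" "k * (h+1) \<le> s" using hp by (auto simp: pos_le_divide_eq)
    then show ?thesis using 1 h by (auto simp: divide_le_eq)
  next
    case 2
    then have "s / (h+1) < 0" using hp by (simp add: divide_less_0_iff)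
    then have "k \<le> 0" "s / (h+1) \<le> k" using k by linarith+
    then have "k \<le> 0" "s \<le> k * (h+1)" using hp by (auto simp: pos_divide_le_eq)
    then show ?thesis using 2 h by (auto simp: divide_le_eq zero_le_divide_iff mult_le_0_iff)
  qed
  then show "0 \<le> 1 - k * (h+1) / s" "0 \<le> k / s" "0 \<le> k * h / s" by auto
qed (use CN0' p z r in auto)


lemma dec_pos:
  assumes p: "p \<in> C" and q: "q \<in> C" and r: "r \<in> C" and z: "z \<in> C"
    and cz: "crd p q r z s h" and h: "h \<ge> 1" and s: "s > 0"
    and k0: "0 \<le> k" and k1: "k \<ge> 1 \<Longrightarrow> k - 1 \<le> s / (h + 1)"
    and wN: "z + r - p - k *s (q - p) \<in> N0"
  shows "z + r - p - k *s (q - p) \<in> C"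
proof -
  define e :: int where "e = (if k \<ge> 1 then 1 else 0)"
  define d where "d = k - e"
  have E1: "p + e *s (q - p) \<in> C"
    using p q by (cases "k \<ge> 1") (simp_all add: e_def)
  have d0: "0 \<le> d" and ds: "d \<le> s / (h + 1)"
  proof -
    show "0 \<le> d" using k0 unfolding d_def e_def by auto
    have "s / (h+1) > 0" using s h by simp
    then show "d \<le> s / (h + 1)" using k1 k0 unfolding d_def e_def by (cases "k \<ge> 1") auto
  qed
  have D1: "p + d *s (q - p) \<in> C"
  proof (rule line_int[OF p q])
    fix k' :: int assume "0 \<le> k' \<and> k' \<le> d \<or> d \<le> k' \<and> k' \<le> 0"
    then have "0 \<le> k' \<and> k' \<le> s / (h + 1)" using d0 ds by auto
    then show "p + k' *s (q - p) \<in> N0" using linept[OF p q r z cz h] s by auto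
  qed
  show ?thesis
    by (rule mv'[OF z r p D1 E1]) (use wN in \<open>simp_all add: d_def vec_eq_iff algebra_simps\<close>)
qed

lemma dec_neg:
  assumes p: "p \<in> C" and q: "q \<in> C" and r: "r \<in> C" and z: "z \<in> C"
    and cz: "crd p q r z s h" and h: "h \<ge> 1" and s: "s < 0"
    and k0: "k \<le> -1" and k1: "s / (h + 1) \<le> k + 1"
    and wN: "z + r - p - k *s (q - p) \<in> N0"
  shows "z + r - p - k *s (q - p) \<in> C"
proof -
  have D1: "p + (k + 1) *s (q - p) \<in> C"
  proof (rule line_int[OF p q])
    fix k' :: int assume "0 \<le> k' \<and> k' \<le> k + 1 \<or> k + 1 \<le> k' \<and> k' \<le> 0"
    then have "s / (h + 1) \<le> k' \<and> k' \<le> 0" using k0 k1 by auto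
    then show "p + k' *s (q - p) \<in> N0" using linept[OF p q r z cz h] s by auto
  qed
  show ?thesis
    by (rule mv'[OF z r q D1 p]) (use wN in \<open>simp_all add: vec_eq_iff algebra_simps\<close>)
qed

lemma wN_pqz:
  assumes p: "p \<in> C" and q: "q \<in> C" and z: "z \<in> C"
    and cz: "crd p q r z s h" and h: "h \<ge> 1"
    and b2: "h * \<lceil>s / h\<rceil> - s > h - 1"
  shows "z + r - p - (\<lceil>s / h\<rceil> - 1) *s (q - p) \<in> N0"
proof -
  define m where "m = \<lceil>s / h\<rceil>"
  have hp: "h > 0" using h by simp
  have m1: "real_of_int m < s / h + 1" unfolding m_def by linarith
  then have m1': "s / h - (m - 1) > 0" by simp
  have b2': "s / h - (m - 1) \<le> 1 / h"
  proof -
    have "h * m - s > h - 1" using b2 unfolding m_def by simp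
    then have "s - h * (m - 1) < 1" by (simp add: algebra_simps)
    then have "(s - h * (m - 1)) / h \<le> 1 / h" using hp by (simp add: divide_right_mono)
    then show ?thesis using hp by (simp add: diff_divide_distrib)
  qed
  show ?thesis unfolding m_def[symmetric]
  proof (rule N0_conv3[where a = "(h - 1) / h" and b = "s / h - (m - 1)" and c = "1 / h - (s / h - (m - 1))"
        and x = z and y = q and z = p])
    fix k
    show "real_of_int ((z + r - p - (m - 1) *s (q - p)) $ k) = (h - 1) / h * real_of_int (z $ k)
        + (s / h - (m - 1)) * real_of_int (q $ k) + (1 / h - (s / h - (m - 1))) * real_of_int (p $ k)"
      using hp by (simp add: crdD[OF cz] field_simps)
  qed (use h m1' b2' CN0' p q z in auto)
qed

lemma wN_prz:
  assumes p: "p \<in> C" and r: "r \<in> C" and z: "z \<in> C"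
    and cz: "crd p q r z s h" and h: "h \<ge> 1"
    and k: "(s > 0 \<and> s / (h + 1) \<le> k \<and> k \<le> s / h) \<or> (s < 0 \<and> s / h \<le> k \<and> k \<le> s / (h + 1))"
  shows "z + r - p - k *s (q - p) \<in> N0"
proof -
  have hp: "h > 0" "h + 1 > 0" using h by simp_all
  have s0: "s \<noteq> 0" using k by auto
  have wts: "0 \<le> k * (h + 1) / s - 1 \<and> 0 \<le> 1 - k * h / s \<and> 0 \<le> 1 - k / s"
  proof (cases "s > 0")
    case True
    then have kk: "s / (h + 1) \<le> k" "k \<le> s / h" using k by auto
    have 1: "s \<le> k * (h+1)" using kk(1) hp by (simp add: pos_divide_le_eq)
    have 2: "k * h \<le> s" using kk(2) hp by (simp add: pos_le_divide_eq)
    have "s / h \<le> s" using True h by (simp add: divide_le_eq mult_le_cancel_left1)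
    then have 3: "k \<le> s" using kk by linarith
    show ?thesis using 1 2 3 True by (auto simp: field_simps)
  next
    case False
    then have sn: "s < 0" using s0 by simp
    then have kk: "s / h \<le> k" "k \<le> s / (h + 1)" using k by auto
    have 1: "k * (h+1) \<le> s" using kk(2) hp by (simp add: pos_le_divide_eq)
    have 2: "s \<le> k * h" using kk(1) hp by (simp add: pos_divide_le_eq)
    have "s \<le> s / h" using sn h by (simp add: le_divide_eq mult_le_cancel_left1)
    then have 3: "s \<le> k" using kk by linarith
    show ?thesis using 1 2 3 sn by (auto simp: field_simps)
  qed
  show ?thesis
  proof (rule N0_conv3[where a = "k * (h + 1) / s - 1" and b = "1 - k * h / s" and c = "1 - k / s"
        and x = p and y = r and z = z])
    fix m
    show "real_of_int ((z + r - p - k *s (q - p)) $ m) = (k * (h + 1) / s - 1) * real_of_int (p $ m)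
        + (1 - k * h / s) * real_of_int (r $ m) + (1 - k / s) * real_of_int (z $ m)"
      using s0 by (simp add: crdD[OF cz] field_simps)
  qed (use wts CN0' p r z in auto)
qed

end

context cl begin

lemma b2step:
  assumes p: "p \<in> C" and q: "q \<in> C" and r: "r \<in> C" and z: "z \<in> C"
    and cz: "crd p q r z s h" and h: "h \<ge> 1"
    and b2: "h * \<lceil>s / h\<rceil> - s > h - 1" and s0: "s \<noteq> 0"
  shows "\<exists>k::int. z + r - p - k *s (q - p) \<in> C"
proof -
  define m where "m = \<lceil>s / h\<rceil>"
  have hp: "h > 0" "h + 1 > 0" using h by simp_all
  have m1: "s / h \<le> m" "m < s / h + 1" unfolding m_def by linarith+
  consider "s > 0" | "s < 0" using s0 by linarith
  then show ?thesis
  proof cases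
    case 1
    define c1 where "c1 = \<lceil>s / (h + 1)\<rceil>"
    have c1f: "s / (h + 1) \<le> c1" "c1 - 1 < s / (h + 1)" unfolding c1_def by linarith+
    have t0: "s / (h + 1) > 0" using 1 hp by simp
    show ?thesis
    proof (cases "c1 \<le> s / h")
      case True
      have wN: "z + r - p - c1 *s (q - p) \<in> N0"
        by (rule wN_prz[OF p r z cz h]) (use 1 c1f True in auto)
      have "0 \<le> c1" using c1f t0 by linarith
      then show ?thesis using dec_pos[OF p q r z cz h 1 _ _ wN] c1f by auto
    next
      case False
      have wN: "z + r - p - (m - 1) *s (q - p) \<in> N0"
        using wN_pqz[OF p q z cz h b2] unfolding m_def .
      have "s / h > 0" using 1 hp by simp
      then have "0 \<le> m - 1" using m1 by linarith
      moreover have "m - 1 - 1 \<le> s / (h + 1)" using False m1 c1f by linarith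
      ultimately have "z + r - p - (m - 1) *s (q - p) \<in> C" using dec_pos[OF p q r z cz h 1 _ _ wN] by auto
      then show ?thesis by blast
    qed
  next
    case 2
    define K where "K = \<lfloor>s / (h + 1)\<rfloor>"
    have Kf: "K \<le> s / (h + 1)" "s / (h + 1) < K + 1" unfolding K_def by linarith+
    have t0: "s / (h + 1) < 0" using 2 hp by (simp add: divide_less_0_iff)
    have sh0: "s / h < 0" using 2 hp by (simp add: divide_less_0_iff)
    show ?thesis
    proof (cases "s / h \<le> K")
      case True
      have wN: "z + r - p - K *s (q - p) \<in> N0"
        by (rule wN_prz[OF p r z cz h]) (use 2 Kf True in auto)
      have "K \<le> -1" using Kf t0 by linarith
      then show ?thesis using dec_neg[OF p q r z cz h 2 _ _ wN] Kf by auto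
    next
      case False
      have wN: "z + r - p - (m - 1) *s (q - p) \<in> N0"
        using wN_pqz[OF p q z cz h b2] unfolding m_def .
      have "m - 1 \<le> -1" using m1 sh0 by linarith
      moreover have "K < m" using False m1 by linarith
      then have "s / (h + 1) \<le> (m - 1) + 1" using Kf by linarith
      ultimately have "z + r - p - (m - 1) *s (q - p) \<in> C" using dec_neg[OF p q r z cz h 2 _ _ wN] by auto
      then show ?thesis by blast
    qed
  qed
qed

end

context cl2 begin

lemma PII:
  "h < real n \<Longrightarrow> p \<in> C \<Longrightarrow> q \<in> C \<Longrightarrow> r \<in> C \<Longrightarrow> z \<in> C \<Longrightarrow> \<bar>dl i j (q - p) (r - p)\<bar> = D
   \<Longrightarrow> crd p q r z s h \<Longrightarrow> 0 < h \<Longrightarrow> \<not> (s \<in> \<int> \<and> h \<in> \<int>) \<Longrightarrow> False"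
proof (induction n arbitrary: p q r z s h)
  case 0
  then show ?case by simp
next
  case (Suc n)
  note p = Suc.prems(2) and q = Suc.prems(3) and r = Suc.prems(4) and z = Suc.prems(5)
    and Dv = Suc.prems(6) and cz = Suc.prems(7) and h0 = Suc.prems(8) and ni = Suc.prems(9)
  have hn: "h < real n + 1" using Suc.prems(1) by simp
  show False
  proof (cases "h < 1")
    case True
    show False using Tri[OF p q z crd_dl[OF cz] Dv] True h0 by simp
  next
    case False
    then have h1: "h \<ge> 1" by simp
    have hp: "h > 0" using h1 by simp
    define m where "m = \<lceil>s / h\<rceil>"
    have m1: "s / h \<le> m" "m < s / h + 1" unfolding m_def by linarith+
    have hm: "s \<le> h * m" using m1(1) hp by (simp add: divide_le_eq mult.commute)
    show False
    proof (cases "h * m - s \<le> h - 1")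
      case True
      define y where "y = p + m *s (q - p) + 1 *s (p - r)"
      have b1': "m - s / h \<le> 1 - 1 / h"
      proof -
        have "(h * m - s) / h \<le> (h - 1) / h" using True hp by (simp add: divide_right_mono)
        then show ?thesis using hp by (simp add: diff_divide_distrib)
      qed
      have yN: "y \<in> N0"
      proof (rule N0_conv3[where a = "1 / h" and b = "m - s / h" and c = "1 - 1 / h - (m - s / h)"
            and x = z and y = q and z = p])
        fix k
        show "real_of_int (y $ k) = 1 / h * real_of_int (z $ k) + (m - s / h) * real_of_int (q $ k)
            + (1 - 1 / h - (m - s / h)) * real_of_int (p $ k)"
          using hp by (simp add: y_def crdD[OF cz] field_simps)
      qed (use hp m1 b1' CN0' p q z in auto)
      have yC: "y \<in> C" by (rule PI[OF p q r y_def yN])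
      have cz2: "crd p y q z h (h * m - s)"
        unfolding crd_def by (simp add: y_def crdD[OF cz] algebra_simps)
      have Dy: "\<bar>dl i j (y - p) (q - p)\<bar> = D"
        using Dv by (simp add: y_def dl_def algebra_simps)
      show False
      proof (cases "h * m - s = 0")
        case False
        then have "0 < h * m - s" using hm by simp
        moreover have "h * m - s < real n" using True hn by simp
        moreover have "\<not> (h \<in> \<int> \<and> h * m - s \<in> \<int>)"
        proof
          assume "h \<in> \<int> \<and> h * m - s \<in> \<int>"
          then have "h * m - (h * m - s) \<in> \<int>" by (auto intro!: Ints_diff Ints_mult)
          then show False using ni \<open>h \<in> \<int> \<and> h * m - s \<in> \<int>\<close> by simp
        qed
        ultimately show False using Suc.IH[OF _ p yC q z Dy cz2] by blast
      next
        case True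
        have zc: "real_of_int (z $ k) = real_of_int (p $ k) + h * (real_of_int (y $ k) - real_of_int (p $ k))" for k
          using crdD[OF cz2, of k] True by simp
        have "h \<notin> \<int>"
        proof
          assume hi: "h \<in> \<int>"
          then have "h * m - (h * m - s) \<in> \<int>" using True by (auto intro!: Ints_mult)
          then show False using ni hi by simp
        qed
        then show False using LineContra[OF p yC q z Dy zc] by blast
      qed
    next
      case False
      then have b2: "h * \<lceil>s / h\<rceil> - s > h - 1" unfolding m_def by simp
      have s0: "s \<noteq> 0"
      proof
        assume "s = 0"
        then show False using b2 h1 by simp
      qed
      obtain k :: int where wC: "z + r - p - k *s (q - p) \<in> C"
        using b2step[OF p q r z cz h1 b2 s0] by blast
      define w where "w = z + r - p - k *s (q - p)"
      have cw: "crd p q r w (s - k) (h - 1)"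
        unfolding crd_def by (simp add: w_def crdD[OF cz] algebra_simps)
      show False
      proof (cases "h = 1")
        case False
        then have "0 < h - 1" "h - 1 < real n" using h1 hn by simp_all
        moreover have "\<not> (s - k \<in> \<int> \<and> h - 1 \<in> \<int>)"
        proof
          assume a: "s - k \<in> \<int> \<and> h - 1 \<in> \<int>"
          then have "(s - k) + k \<in> \<int>" "(h - 1) + 1 \<in> \<int>" by (auto intro!: Ints_add)
          then show False using ni by simp
        qed
        ultimately show False using Suc.IH[OF _ p q r wC[folded w_def] Dv cw] by blast
      next
        case True
        have wc: "real_of_int (w $ k') = real_of_int (p $ k') + (s - k) * (real_of_int (q $ k') - real_of_int (p $ k'))" for k'
          using crdD[OF cw, of k'] True by simp
        have "s - k \<notin> \<int>"
        proof
          assume "s - k \<in> \<int>"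
          then have "(s - k) + k \<in> \<int>" by (auto intro!: Ints_add)
          then show False using ni True by simp
        qed
        then show False using LineContra[OF p q r wC[folded w_def] Dv wc] by blast
      qed
    qed
  qed
qed

end

lemma coset_iff: "is_coset K \<longleftrightarrow> K \<noteq> {} \<and> (\<forall>x\<in>K. \<forall>y\<in>K. \<forall>z\<in>K. x + y - z \<in> K)"
proof
  assume "is_coset K"
  then obtain a H where H: "is_subgroup H" and K: "K = (\<lambda>h. a + h) ` H"
    unfolding is_coset_def by blast
  have H0: "0 \<in> H" and Hadd: "\<And>x y. x \<in> H \<Longrightarrow> y \<in> H \<Longrightarrow> x + y \<in> H"
    and Hneg: "\<And>x. x \<in> H \<Longrightarrow> - x \<in> H" using H unfolding is_subgroup_def by auto
  have "K \<noteq> {}" using H0 K by auto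
  moreover have "x + y - z \<in> K" if xK: "x \<in> K" and yK: "y \<in> K" and zK: "z \<in> K" for x y z
  proof -
    obtain h1 where "h1 \<in> H" "x = a + h1" using xK K by blast
    moreover obtain h2 where "h2 \<in> H" "y = a + h2" using yK K by blast
    moreover obtain h3 where "h3 \<in> H" "z = a + h3" using zK K by blast
    moreover have "h1 + h2 + - h3 \<in> H" using calculation Hadd Hneg by blast
    ultimately show ?thesis unfolding K by (auto intro!: image_eqI[where x = "h1 + h2 + - h3"])
  qed
  ultimately show "K \<noteq> {} \<and> (\<forall>x\<in>K. \<forall>y\<in>K. \<forall>z\<in>K. x + y - z \<in> K)" by blast
next
  assume a: "K \<noteq> {} \<and> (\<forall>x\<in>K. \<forall>y\<in>K. \<forall>z\<in>K. x + y - z \<in> K)"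
  then obtain t where t: "t \<in> K" by blast
  define H where "H = (\<lambda>k. k - t) ` K"
  have "is_subgroup H" unfolding is_subgroup_def
  proof (intro conjI ballI)
    show "0 \<in> H" using t unfolding H_def by (auto intro!: image_eqI[where x = t])
  next
    fix x y assume "x \<in> H" "y \<in> H"
    then obtain x' y' where "x' \<in> K" "y' \<in> K" "x = x' - t" "y = y' - t" unfolding H_def by auto
    moreover have "x' + y' - t \<in> K" using a t calculation by blast
    ultimately show "x + y \<in> H" unfolding H_def by (auto intro!: image_eqI[where x = "x' + y' - t"])
  next
    fix x assume "x \<in> H"
    then obtain x' where "x' \<in> K" "x = x' - t" unfolding H_def by auto
    moreover have "t + t - x' \<in> K" using a t calculation by blast
    ultimately show "- x \<in> H" unfolding H_def by (auto intro!: image_eqI[where x = "t + t - x'"])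
  qed
  moreover have "K = (\<lambda>h. t + h) ` H" unfolding H_def by (auto simp: image_image)
  ultimately show "is_coset K" unfolding is_coset_def by blast
qed

lemma Lam_sup: "G \<subseteq> Lam G"
  unfolding Lam_def by auto

lemma Lam_least: "is_coset K \<Longrightarrow> G \<subseteq> K \<Longrightarrow> Lam G \<subseteq> K"
  unfolding Lam_def by auto

lemma Lam_aff:
  assumes "x \<in> Lam G" "y \<in> Lam G" "z \<in> Lam G" shows "x + y - z \<in> Lam G"
  unfolding Lam_def
proof (rule InterI)
  fix K assume "K \<in> {C. is_coset C \<and> G \<subseteq> C}"
  then have K: "is_coset K" "G \<subseteq> K" by auto
  have "x \<in> K" "y \<in> K" "z \<in> K" using assms K unfolding Lam_def by auto
  then show "x + y - z \<in> K" using K(1) unfolding coset_iff by blast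
qed

lemma Lam_coset: "G \<noteq> {} \<Longrightarrow> is_coset (Lam G)"
  unfolding coset_iff using Lam_sup Lam_aff by blast

lemma E_sub: "E n G \<subseteq> Lam G \<inter> N0"
  unfolding E_def by auto

lemma E_sup: assumes "G \<subseteq> N0" shows "G \<subseteq> E n G"
proof
  fix g assume g: "g \<in> G"
  have rp: "is_rep G g g (\<lambda>_. 0)" unfolding is_rep_def using g by simp
  have "enat 0 \<in> {enat (rep_cost m) | g' m. is_rep G g g' m}"
    unfolding mem_Collect_eq by (rule exI[of _ g], rule exI[of _ "\<lambda>_. 0"]) (use rp in \<open>simp add: rep_cost_def\<close>)
  then have "dist_G G g \<le> enat 0"
    unfolding dist_G_def by (rule Inf_lower)
  then have "dist_G G g \<le> enat n" by (simp add: zero_enat_def[symmetric])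
  then show "g \<in> E n G" unfolding E_def using g assms Lam_sup by auto
qed

lemma sum_ind: "finite F \<Longrightarrow> a \<in> F \<Longrightarrow> (\<Sum>y\<in>F. of_bool (y = a) * (f y :: int)) = f a"
proof -
  assume "finite F" "a \<in> F"
  have "(\<Sum>y\<in>F. of_bool (y = a) * f y) = (\<Sum>y\<in>F. if y = a then f y else 0)"
    by (rule sum.cong) auto
  also have "\<dots> = f a" using \<open>finite F\<close> \<open>a \<in> F\<close> by (simp add: sum.delta')
  finally show ?thesis .
qed

lemma E_move:
  assumes G: "a \<in> G" "b \<in> G" "c \<in> G" "d \<in> G" "e \<in> G" and xN: "a + b + c - d - e \<in> N0"
  shows "a + b + c - d - e \<in> E 2 G"
proof -
  define x where "x = a + b + c - d - e"
  define m0 where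
    "m0 y = (of_bool (y = a) + of_bool (y = b) - of_bool (y = d) - of_bool (y = e) :: int)" for y
  define m where "m y = (if y = c then 0 else m0 y)" for y
  define F where "F = {a, b, d, e}"
  have fF: "finite F" and aF: "a \<in> F" "b \<in> F" "d \<in> F" "e \<in> F" unfolding F_def by auto
  have supp: "{y. m y \<noteq> 0} \<subseteq> F"
  proof
    fix y assume y: "y \<in> {y. m y \<noteq> 0}"
    show "y \<in> F"
    proof (rule ccontr)
      assume "y \<notin> F"
      then have "y \<noteq> a" "y \<noteq> b" "y \<noteq> d" "y \<noteq> e" unfolding F_def by auto
      then have "m y = 0" unfolding m_def m0_def by simp
      then show False using y by simp
    qed
  qed
  have nn: "\<And>P. 0 \<le> (of_bool P :: int)" by simp
  have mpos: "max (m y) 0 \<le> of_bool (y = a) * 1 + of_bool (y = b) * 1" for y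
  proof (cases "y = c")
    case True
    then show ?thesis using nn[of "y = a"] nn[of "y = b"] by (simp add: m_def)
  next
    case False
    then have "m y = m0 y" by (simp add: m_def)
    moreover have "m0 y \<le> of_bool (y = a) + of_bool (y = b)"
      unfolding m0_def using nn[of "y = d"] nn[of "y = e"] by linarith
    moreover have "0 \<le> of_bool (y = a) + (of_bool (y = b) :: int)"
      using nn[of "y = a"] nn[of "y = b"] by linarith
    ultimately show ?thesis by simp
  qed
  have mneg: "min (m y) 0 \<ge> - (of_bool (y = d) * 1 + of_bool (y = e) * 1)" for y
  proof (cases "y = c")
    case True
    then show ?thesis using nn[of "y = d"] nn[of "y = e"] by (simp add: m_def)
  next
    case False
    then have "m y = m0 y" by (simp add: m_def)
    moreover have "m0 y \<ge> - (of_bool (y = d) + of_bool (y = e))"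
      unfolding m0_def using nn[of "y = a"] nn[of "y = b"] by linarith
    moreover have "- (of_bool (y = d) + (of_bool (y = e) :: int)) \<le> 0"
      using nn[of "y = d"] nn[of "y = e"] by linarith
    ultimately show ?thesis by simp
  qed
  have fin: "finite {y. m y \<noteq> 0}" using finite_subset[OF supp fF] .
  have sum1: "(\<Sum>y\<in>{y. m y \<noteq> 0}. m y *s (y - c)) = (\<Sum>y\<in>F. m y *s (y - c))"
    by (rule sum.mono_neutral_left[OF fF supp]) auto
  have sum2: "(\<Sum>y\<in>F. m y *s (y - c)) = (\<Sum>y\<in>F. m0 y *s (y - c))"
    by (rule sum.cong) (auto simp: m_def)
  have sum3: "(\<Sum>y\<in>F. m0 y *s (y - c)) = (a - c) + (b - c) - (d - c) - (e - c)"
  proof (subst vec_eq_iff, intro allI)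
    fix k
    have "(\<Sum>y\<in>F. m0 y *s (y - c)) $ k = (\<Sum>y\<in>F. m0 y * (y $ k - c $ k))"
      by (simp add: sum_component right_diff_distrib)
    also have "\<dots> = (\<Sum>y\<in>F. of_bool (y = a) * (y $ k - c $ k)) + (\<Sum>y\<in>F. of_bool (y = b) * (y $ k - c $ k))
        - (\<Sum>y\<in>F. of_bool (y = d) * (y $ k - c $ k)) - (\<Sum>y\<in>F. of_bool (y = e) * (y $ k - c $ k))"
      unfolding m0_def by (simp add: algebra_simps sum.distrib sum_subtractf)
    also have "\<dots> = (a $ k - c $ k) + (b $ k - c $ k) - (d $ k - c $ k) - (e $ k - c $ k)"
      using sum_ind[OF fF aF(1)] sum_ind[OF fF aF(2)] sum_ind[OF fF aF(3)] sum_ind[OF fF aF(4)] by simp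
    finally show "(\<Sum>y\<in>F. m0 y *s (y - c)) $ k = ((a - c) + (b - c) - (d - c) - (e - c)) $ k" by simp
  qed
  have rep: "is_rep G x c m"
    unfolding is_rep_def
  proof (intro conjI allI impI)
    show "c \<in> G" by fact
    show "finite {a. m a \<noteq> 0}" by (rule fin)
    fix y assume my: "m y \<noteq> 0"
    then have "y \<in> F" using supp by auto
    then show "y \<in> G" using G unfolding F_def by auto
    show "y \<noteq> c" using my unfolding m_def by auto
  next
    show "x = c + (\<Sum>a\<in>{a. m a \<noteq> 0}. m a *s (a - c))"
      unfolding sum1 sum2 sum3 x_def by (simp add: algebra_simps)
  qed
  have pos: "(\<Sum>y\<in>{y. m y \<noteq> 0}. max (m y) 0) \<le> 2"
  proof -
    have "(\<Sum>y\<in>{y. m y \<noteq> 0}. max (m y) 0) = (\<Sum>y\<in>F. max (m y) 0)"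
      by (rule sum.mono_neutral_left[OF fF supp]) auto
    also have "\<dots> \<le> (\<Sum>y\<in>F. of_bool (y = a) * 1 + of_bool (y = b) * 1)"
      by (rule sum_mono) (rule mpos)
    also have "\<dots> = 2" using sum_ind[OF fF aF(1), of "\<lambda>_. 1"] sum_ind[OF fF aF(2), of "\<lambda>_. 1"]
      by (simp add: sum.distrib)
    finally show ?thesis .
  qed
  have neg: "- (\<Sum>y\<in>{y. m y \<noteq> 0}. min (m y) 0) \<le> 2"
  proof -
    have "(\<Sum>y\<in>{y. m y \<noteq> 0}. min (m y) 0) = (\<Sum>y\<in>F. min (m y) 0)"
      by (rule sum.mono_neutral_left[OF fF supp]) auto
    also have "\<dots> \<ge> (\<Sum>y\<in>F. - (of_bool (y = d) * 1 + of_bool (y = e) * 1))"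
      by (rule sum_mono) (rule mneg)
    moreover have "(\<Sum>y\<in>F. - (of_bool (y = d) * 1 + of_bool (y = e) * (1::int))) = -2"
      using sum_ind[OF fF aF(3), of "\<lambda>_. 1"] sum_ind[OF fF aF(4), of "\<lambda>_. 1"]
      by (simp add: sum_subtractf sum_negf)
    ultimately show ?thesis by linarith
  qed
  have gen: "\<And>A B::int. A \<le> 2 \<Longrightarrow> B \<le> 2 \<Longrightarrow> nat (max A B) \<le> 2" by simp
  have rc: "rep_cost m \<le> 2" unfolding rep_cost_def by (rule gen[OF pos neg])
  have "enat (rep_cost m) \<in> {enat (rep_cost m) | g' m. is_rep G x g' m}"
    unfolding mem_Collect_eq by (rule exI[of _ c], rule exI[of _ m], rule conjI[OF refl rep])
  then have dd: "dist_G G x \<le> enat (rep_cost m)"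
    unfolding dist_G_def by (rule Inf_lower)
  have "enat (rep_cost m) \<le> 2" using rc by (simp add: numeral_eq_enat)
  then have "dist_G G x \<le> 2" using dd by (rule order_trans[rotated])
  moreover have "x \<in> Lam G"
  proof -
    have GL: "a \<in> Lam G" "b \<in> Lam G" "c \<in> Lam G" "d \<in> Lam G" "e \<in> Lam G"
      using G Lam_sup by auto
    have "a + b - d \<in> Lam G" by (rule Lam_aff[OF GL(1,2,4)])
    then have "(a + b - d) + c - e \<in> Lam G" by (rule Lam_aff[OF _ GL(3,5)])
    moreover have "(a + b - d) + c - e = x" unfolding x_def by (simp add: algebra_simps)
    ultimately show ?thesis by simp
  qed
  moreover have "dist_G G x \<le> enat 2 \<longleftrightarrow> dist_G G x \<le> 2" by (simp add: numeral_eq_enat)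
  ultimately have "x \<in> {lam \<in> Lam G \<inter> N0. dist_G G lam \<le> enat 2}" using xN x_def by blast
  then show ?thesis unfolding E_def x_def .
qed

context cl2 begin

lemma crd_swap1: "crd p q r z s h \<Longrightarrow> crd p r q z (- h) (- s)"
  unfolding crd_def by (simp add: algebra_simps)

lemma crd_swap2: "crd p q r z s h \<Longrightarrow> crd q r p z (- h) (s - 1 - h)"
  unfolding crd_def by (simp add: algebra_simps)

lemma all_int:
  assumes p: "p \<in> C" and q: "q \<in> C" and r: "r \<in> C" and z: "z \<in> C"
    and Dv: "\<bar>dl i j (q - p) (r - p)\<bar> = D" and cz: "crd p q r z s h"
  shows "s \<in> \<int> \<and> h \<in> \<int>"
proof (rule ccontr)
  assume ni: "\<not> (s \<in> \<int> \<and> h \<in> \<int>)"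
  have "dl i j (r - p) (q - p) = - dl i j (q - p) (r - p)" by (simp add: dl_def algebra_simps)
  then have Dv1: "\<bar>dl i j (r - p) (q - p)\<bar> = D" using Dv by simp
  have Dv2: "\<bar>dl i j (r - q) (p - q)\<bar> = D" using Dv by (simp add: dl_def algebra_simps)
  have nat_gt: "\<And>x::real. x < real (nat \<lceil>x\<rceil> + 1)" by linarith
  consider "h > 0" | "h \<le> 0" "s < 0" | "h \<le> 0" "s \<ge> 0" "1 + h - s < 0" | "h \<le> 0" "s \<ge> 0" "1 + h - s \<ge> 0"
    by linarith
  then show False
  proof cases
    case 1
    then show False using PII[OF nat_gt p q r z Dv cz _ ni] by blast
  next
    case 2
    have ni': "\<not> (- h \<in> \<int> \<and> - s \<in> \<int>)" using ni by (auto simp: minus_in_Ints_iff)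
    show False using PII[OF nat_gt p r q z Dv1 crd_swap1[OF cz] _ ni'] 2 by simp
  next
    case 3
    have ni': "\<not> (- h \<in> \<int> \<and> s - 1 - h \<in> \<int>)"
    proof
      assume a: "- h \<in> \<int> \<and> s - 1 - h \<in> \<int>"
      then have "h \<in> \<int>" by (simp add: minus_in_Ints_iff)
      moreover have "(s - 1 - h) + 1 + h \<in> \<int>" using a calculation by (intro Ints_add) auto
      ultimately show False using ni by simp
    qed
    show False using PII[OF nat_gt q r p z Dv2 crd_swap2[OF cz] _ ni'] 3 by simp
  next
    case 4
    show False
    proof (cases "h \<in> \<int>")
      case False
      have "h \<noteq> 0" "h \<noteq> -1" using False by auto
      then have "0 < \<bar>- h\<bar>" "\<bar>- h\<bar> < 1" using 4 by auto
      then show False using Tri[OF p q z crd_dl[OF cz] Dv] by blast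
    next
      case True
      then have sn: "s \<notin> \<int>" using ni by simp
      then have "s \<noteq> 0" "s \<noteq> 1" by auto
      then have "0 < \<bar>- (- s)\<bar>" "\<bar>- (- s)\<bar> < 1" using 4 by auto
      then show False using Tri[OF p r z crd_dl[OF crd_swap1[OF cz]] Dv1] by blast
    qed
  qed
qed

end

lemma to_real_add: "to_real (x + y) = to_real x + to_real y" by (simp add: vec_eq_iff)
lemma to_real_diff: "to_real (x - y) = to_real x - to_real y" by (simp add: vec_eq_iff)

lemma Kc_coset:
  assumes "T \<noteq> {}"
  shows "is_coset {x. to_real x \<in> affine hull (to_real ` T)}"
  unfolding coset_iff
proof (intro conjI ballI)
  obtain t where t: "t \<in> T" using assms by blast
  have "to_real t \<in> affine hull (to_real ` T)" by (rule hull_inc) (use t in blast)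
  then show "{x. to_real x \<in> affine hull (to_real ` T)} \<noteq> {}" by blast
next
  fix x y z assume "x \<in> {x. to_real x \<in> affine hull (to_real ` T)}" "y \<in> {x. to_real x \<in> affine hull (to_real ` T)}"
    "z \<in> {x. to_real x \<in> affine hull (to_real ` T)}"
  then have "to_real x + 1 *\<^sub>R (to_real y - to_real z) \<in> affine hull (to_real ` T)"
    by (intro mem_affine_3_minus[OF affine_affine_hull]) simp_all
  then show "x + y - z \<in> {x. to_real x \<in> affine hull (to_real ` T)}"
    by (simp add: to_real_add to_real_diff algebra_simps)
qed

lemma coll_dl:
  assumes "collinear {to_real p, to_real q, to_real r}"
  shows "dl i j (q - p) (r - p) = 0"
proof -
  obtain u where u: "\<forall>x\<in>{to_real p, to_real q, to_real r}. \<forall>y\<in>{to_real p, to_real q, to_real r}. \<exists>c. x - y = c *\<^sub>R u"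
    using assms unfolding collinear_def by blast
  obtain c1 where c1: "to_real q - to_real p = c1 *\<^sub>R u" using u by blast
  obtain c2 where c2: "to_real r - to_real p = c2 *\<^sub>R u" using u by blast
  have "\<And>k. real_of_int (q $ k) - real_of_int (p $ k) = c1 * u $ k"
    using c1 by (simp add: vec_eq_iff)
  moreover have "\<And>k. real_of_int (r $ k) - real_of_int (p $ k) = c2 * u $ k"
    using c2 by (simp add: vec_eq_iff)
  ultimately have "real_of_int (dl i j (q - p) (r - p)) = (c1 * u $ i) * (c2 * u $ j) - (c1 * u $ j) * (c2 * u $ i)"
    unfolding dl_def by simp
  also have "\<dots> = 0" by (simp add: algebra_simps)
  finally show ?thesis by simp
qed

lemma G2:
  assumes aff: "aff_dim (to_real ` T) = 2"
    and P: "to_real p \<in> affine hull (to_real ` T)" and Q: "to_real q \<in> affine hull (to_real ` T)"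
    and R: "to_real r \<in> affine hull (to_real ` T)" and Z: "to_real z \<in> affine hull (to_real ` T)"
    and d: "dl i j (q - p) (r - p) \<noteq> 0"
  shows "\<exists>s h. crd p q r z s h"
proof -
  let ?A = "affine hull (to_real ` T)"
  let ?S = "{to_real p, to_real q, to_real r}"
  have Zin: "to_real z \<in> affine hull ?S"
  proof (rule ccontr)
    assume nz: "to_real z \<notin> affine hull ?S"
    have "affine hull ?S \<subset> affine hull (insert (to_real z) ?S)"
    proof
      show "affine hull ?S \<subseteq> affine hull (insert (to_real z) ?S)" by (rule hull_mono) auto
      show "affine hull ?S \<noteq> affine hull (insert (to_real z) ?S)"
        using nz hull_inc[of "to_real z" "insert (to_real z) ?S"] by auto
    qed
    then have 1: "aff_dim ?S < aff_dim (insert (to_real z) ?S)" by (rule aff_dim_psubset)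
    have "insert (to_real z) ?S \<subseteq> ?A" using P Q R Z by auto
    then have "aff_dim (insert (to_real z) ?S) \<le> aff_dim ?A" by (rule aff_dim_subset)
    then have "aff_dim (insert (to_real z) ?S) \<le> 2" using aff by simp
    then have "aff_dim ?S \<le> 1" using 1 by linarith
    then have "collinear ?S" by (simp add: collinear_aff_dim)
    then show False using coll_dl d by blast
  qed
  then obtain u v w where uvw: "to_real z = u *\<^sub>R to_real p + v *\<^sub>R to_real q + w *\<^sub>R to_real r" "u + v + w = 1"
    unfolding affine_hull_3 by blast
  have "crd p q r z v (- w)"
    unfolding crd_def
  proof
    fix k
    have "real_of_int (z $ k) = u * real_of_int (p $ k) + v * real_of_int (q $ k) + w * real_of_int (r $ k)"
      using uvw(1) by (simp add: vec_eq_iff)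
    moreover have "u = 1 - v - w" using uvw(2) by linarith
    ultimately show "real_of_int (z $ k) = real_of_int (p $ k) + v * (real_of_int (q $ k) - real_of_int (p $ k))
        + - w * (real_of_int (p $ k) - real_of_int (r $ k))"
      by (simp add: algebra_simps)
  qed
  then show ?thesis by blast
qed

lemma G1:
  assumes aff: "aff_dim (to_real ` T) = 2"
  shows "\<exists>t1\<in>T. \<exists>t2\<in>T. \<exists>t3\<in>T. \<exists>i j. dl i j (t2 - t1) (t3 - t1) \<noteq> 0"
proof (rule ccontr)
  assume "\<not> ?thesis"
  then have all0: "\<And>t1 t2 t3 i j. t1 \<in> T \<Longrightarrow> t2 \<in> T \<Longrightarrow> t3 \<in> T \<Longrightarrow> dl i j (t2 - t1) (t3 - t1) = 0"
    by blast
  have "collinear (to_real ` T)"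
  proof (cases "\<exists>t1\<in>T. \<exists>t2\<in>T. t1 \<noteq> t2")
    case False
    then have "\<exists>t. T \<subseteq> {t}" by blast
    then obtain t where "T \<subseteq> {t}" by blast
    then have "to_real ` T \<subseteq> {to_real t}" by auto
    then show ?thesis using collinear_subset collinear_sing by blast
  next
    case True
    then obtain t1 t2 where t: "t1 \<in> T" "t2 \<in> T" "t1 \<noteq> t2" by blast
    then obtain i0 where "t1 $ i0 \<noteq> t2 $ i0" by (auto simp: vec_eq_iff)
    then have i0: "(t2 - t1) $ i0 \<noteq> 0" by simp
    define U where "U = to_real (t2 - t1)"
    define cf where "cf t = real_of_int ((t - t1) $ i0) / real_of_int ((t2 - t1) $ i0)" for t
    have rep: "to_real t = to_real t1 + cf t *\<^sub>R U" if "t \<in> T" for t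
    proof (subst vec_eq_iff, intro allI)
      fix k
      have "dl i0 k (t2 - t1) (t - t1) = 0" using all0[OF t(1) t(2) that] .
      then have e: "real_of_int ((t2 - t1) $ i0) * real_of_int ((t - t1) $ k)
          = real_of_int ((t2 - t1) $ k) * real_of_int ((t - t1) $ i0)"
      proof -
        have "(t2 - t1) $ i0 * (t - t1) $ k = (t2 - t1) $ k * (t - t1) $ i0"
          using \<open>dl i0 k (t2 - t1) (t - t1) = 0\<close> unfolding dl_def by simp
        then show ?thesis by (metis of_int_mult)
      qed
      have "real_of_int ((t - t1) $ k) = cf t * real_of_int ((t2 - t1) $ k)"
        using e i0 unfolding cf_def by (simp add: field_simps)
      then show "to_real t $ k = (to_real t1 + cf t *\<^sub>R U) $ k"
        unfolding U_def by (simp add: algebra_simps)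
    qed
    show ?thesis unfolding collinear_def
    proof (intro exI[of _ U] ballI)
      fix x y assume "x \<in> to_real ` T" "y \<in> to_real ` T"
      then obtain tx ty where txy: "tx \<in> T" "ty \<in> T" "x = to_real tx" "y = to_real ty" by blast
      have "x - y = (to_real t1 + cf tx *\<^sub>R U) - (to_real t1 + cf ty *\<^sub>R U)"
        using rep[OF txy(1)] rep[OF txy(2)] txy(3,4) by simp
      then have "x - y = (cf tx - cf ty) *\<^sub>R U" by (simp add: algebra_simps)
      then show "\<exists>c. x - y = c *\<^sub>R U" by blast
    qed
  qed
  then have "aff_dim (to_real ` T) \<le> 1" by (simp add: collinear_aff_dim)
  then show False using aff by simp
qed

theorem lemma3p5:
  fixes T :: "(int ^ 'n) set"
  assumes "CARD('n) \<ge> 3"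
    and "T \<subseteq> N0"
    and "aff_dim (to_real ` T) = 2"
  shows "completion 2 T = Lam T \<inter> N0"
proof -
  note TN = assms(2) and aff = assms(3)
  have Tne: "T \<noteq> {}" using aff by auto
  define st where "st k = (E 2 ^^ k) T" for k
  have st0: "st 0 = T" and stS: "\<And>k. st (Suc k) = E 2 (st k)" by (simp_all add: st_def)
  have stN: "st k \<subseteq> N0" for k
  proof (induction k)
    case 0 then show ?case using TN st0 by simp
  next
    case (Suc k) then show ?case using E_sub stS by blast
  qed
  have stM: "st k \<subseteq> st (Suc k)" for k using E_sup[OF stN] stS by simp
  have stle: "k \<le> l \<Longrightarrow> st k \<subseteq> st l" for k l
    by (rule lift_Suc_mono_le[of st]) (use stM in auto)
  have stL: "st k \<subseteq> Lam T" for k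
  proof (induction k)
    case 0 then show ?case using Lam_sup st0 by simp
  next
    case (Suc k)
    have "Lam (st k) \<subseteq> Lam T" by (rule Lam_least[OF Lam_coset[OF Tne] Suc.IH])
    then show ?case using E_sub stS by blast
  qed
  define C where "C = completion 2 T"
  have Cin: "x \<in> C \<longleftrightarrow> (\<exists>k\<ge>1. x \<in> st k)" for x
    unfolding C_def completion_def st_def by auto
  have CN: "C \<subseteq> N0" using Cin stN by blast
  have CL: "C \<subseteq> Lam T" using Cin stL by blast
  have TC: "T \<subseteq> C" using Cin[of _] stM[of 0] st0 by auto
  interpret c: cl C
  proof
    show "C \<subseteq> N0" by (rule CN)
    fix a b c d e assume abcde: "a \<in> C" "b \<in> C" "c \<in> C" "d \<in> C" "e \<in> C"
      and xN: "a + b + c - d - e \<in> N0"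
    obtain ka where ka: "ka \<ge> 1" "a \<in> st ka" using abcde(1) Cin[of a] by blast
    obtain kb where kb: "kb \<ge> 1" "b \<in> st kb" using abcde(2) Cin[of b] by blast
    obtain kc where kc: "kc \<ge> 1" "c \<in> st kc" using abcde(3) Cin[of c] by blast
    obtain kd where kd: "kd \<ge> 1" "d \<in> st kd" using abcde(4) Cin[of d] by blast
    obtain ke where ke: "ke \<ge> 1" "e \<in> st ke" using abcde(5) Cin[of e] by blast
    define K where "K = max ka (max kb (max kc (max kd ke)))"
    have le: "ka \<le> K" "kb \<le> K" "kc \<le> K" "kd \<le> K" "ke \<le> K" unfolding K_def by simp_all
    have "a \<in> st K" using ka(2) stle[OF le(1)] by blast
    moreover have "b \<in> st K" using kb(2) stle[OF le(2)] by blast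
    moreover have "c \<in> st K" using kc(2) stle[OF le(3)] by blast
    moreover have "d \<in> st K" using kd(2) stle[OF le(4)] by blast
    moreover have "e \<in> st K" using ke(2) stle[OF le(5)] by blast
    ultimately have "a + b + c - d - e \<in> E 2 (st K)" by (intro E_move xN)
    then have "a + b + c - d - e \<in> st (Suc K)" unfolding stS .
    then show "a + b + c - d - e \<in> C" unfolding Cin by (intro exI[of _ "Suc K"]) simp
  qed
  obtain t1 t2 t3 i j where t: "t1 \<in> T" "t2 \<in> T" "t3 \<in> T" "dl i j (t2 - t1) (t3 - t1) \<noteq> 0"
    using G1[OF aff] by blast
  define P where "P n \<longleftrightarrow> (\<exists>a b c. a \<in> C \<and> b \<in> C \<and> c \<in> C \<and> dl i j (b - a) (c - a) \<noteq> 0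
      \<and> n = nat \<bar>dl i j (b - a) (c - a)\<bar>)" for n
  have "P (nat \<bar>dl i j (t2 - t1) (t3 - t1)\<bar>)" unfolding P_def using t TC by blast
  then have "P (Least P)" by (rule LeastI)
  then obtain p q r where pqr: "p \<in> C" "q \<in> C" "r \<in> C" "dl i j (q - p) (r - p) \<noteq> 0"
    "Least P = nat \<bar>dl i j (q - p) (r - p)\<bar>" unfolding P_def by blast
  define D where "D = int (Least P)"
  have Dv: "\<bar>dl i j (q - p) (r - p)\<bar> = D" unfolding D_def pqr(5) by simp
  interpret c2: cl2 C i j D
  proof
    show "D > 0" using Dv pqr(4) by simp
    fix a b c assume abc: "a \<in> C" "b \<in> C" "c \<in> C" "dl i j (b - a) (c - a) \<noteq> 0"
    then have "P (nat \<bar>dl i j (b - a) (c - a)\<bar>)" unfolding P_def by blast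
    then have "Least P \<le> nat \<bar>dl i j (b - a) (c - a)\<bar>" by (rule Least_le)
    then show "D \<le> \<bar>dl i j (b - a) (c - a)\<bar>" unfolding D_def by simp
  qed
  let ?Kc = "{x. to_real x \<in> affine hull (to_real ` T)}"
  have TKc: "T \<subseteq> ?Kc" by (auto intro: hull_inc)
  have LKc: "Lam T \<subseteq> ?Kc" by (rule Lam_least[OF Kc_coset[OF Tne] TKc])
  define M where "M = {p + a *s (q - p) + b *s (p - r) | a b. True}"
  have CM: "C \<subseteq> M"
  proof
    fix z assume z: "z \<in> C"
    have "to_real z \<in> affine hull (to_real ` T)" "to_real p \<in> affine hull (to_real ` T)"
      "to_real q \<in> affine hull (to_real ` T)" "to_real r \<in> affine hull (to_real ` T)"
      using z pqr CL LKc by auto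
    then obtain s h where cz: "crd p q r z s h" using G2[OF aff _ _ _ _ pqr(4)] by blast
    have "s \<in> \<int> \<and> h \<in> \<int>" by (rule c2.all_int[OF pqr(1-3) z Dv cz])
    then obtain a b where ab: "s = of_int a" "h = of_int b" by (auto elim!: Ints_cases)
    have "z = p + a *s (q - p) + b *s (p - r)"
    proof (subst vec_eq_iff, intro allI)
      fix k
      have "real_of_int (z $ k) = real_of_int ((p + a *s (q - p) + b *s (p - r)) $ k)"
        using crdD[OF cz, of k] ab by (simp add: algebra_simps)
      then show "z $ k = (p + a *s (q - p) + b *s (p - r)) $ k" by (simp only: of_int_eq_iff)
    qed
    then show "z \<in> M" unfolding M_def by blast
  qed
  have Mc: "is_coset M" unfolding coset_iff
  proof (intro conjI ballI)
    show "M \<noteq> {}" unfolding M_def by blast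
    fix x y z assume "x \<in> M" "y \<in> M" "z \<in> M"
    then obtain a1 b1 a2 b2 a3 b3 where xyz: "x = p + a1 *s (q - p) + b1 *s (p - r)"
      "y = p + a2 *s (q - p) + b2 *s (p - r)" "z = p + a3 *s (q - p) + b3 *s (p - r)"
      unfolding M_def by blast
    have "x + y - z = p + (a1 + a2 - a3) *s (q - p) + (b1 + b2 - b3) *s (p - r)"
      unfolding xyz(1) xyz(2) xyz(3) by (simp add: vec_eq_iff algebra_simps)
    then show "x + y - z \<in> M" unfolding M_def by blast
  qed
  have LM: "Lam T \<subseteq> M" by (rule Lam_least[OF Mc]) (use TC CM in blast)
  have "Lam T \<inter> N0 \<subseteq> C"
  proof
    fix x assume x: "x \<in> Lam T \<inter> N0"
    then obtain a b where xe: "x = p + a *s (q - p) + b *s (p - r)" using LM unfolding M_def by blast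
    have "x \<in> N0" using x by simp
    then show "x \<in> C" by (rule c.PI[OF pqr(1-3) xe])
  qed
  then show ?thesis using CN CL unfolding C_def by blast
qed

end
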